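(* Let $K$ be a field, $R = K[[Y,Z,W]]$, and let $P$ be the kernel of the $K$-algebra homomorphism $\phi: K[[Y,Z,W]]\to K[[T]]$ with $\phi(W)=T^3$, $\phi(Y)=T^4$, $\phi(Z)=T^5$; thus $P = (W^3-YZ,\ Y^2-WZ,\ Z^2-W^2Y)$. Then $P$ is a G-ideal of $R$, $P^2$ is not $P$-primary, and consequently there exists a maximal ideal $M$ of $R[X]$ with $M\cap R = P$ that is not power stable.
   Context: A prime ideal $P$ of a ring $R$ is a G-ideal if the fraction field of $R/P$ is finitely generated as an algebra over $R/P$. An ideal $I$ of the polynomial ring $R[X]$ over an integral domain $R$ is called power stable if $I^t\cap R = (I\cap R)^t$ for all integers $t\geq 1$. *)

theory Defs
  imports "HOL-Computational_Algebra.Computational_Algebra"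
begin

definition is_ideal :: "'r::comm_ring_1 set \<Rightarrow> bool" where
  "is_ideal I \<longleftrightarrow> 0 \<in> I \<and> (\<forall>x\<in>I. \<forall>y\<in>I. x + y \<in> I) \<and> (\<forall>r. \<forall>x\<in>I. r * x \<in> I)"

definition prime_ideal :: "'r::comm_ring_1 set \<Rightarrow> bool" where
  "prime_ideal P \<longleftrightarrow> is_ideal P \<and> P \<noteq> UNIV \<and> (\<forall>a b. a * b \<in> P \<longrightarrow> a \<in> P \<or> b \<in> P)"

definition maximal_ideal :: "'r::comm_ring_1 set \<Rightarrow> bool" where
  "maximal_ideal M \<longleftrightarrow> is_ideal M \<and> M \<noteq> UNIV \<and>
     (\<forall>J. is_ideal J \<and> M \<subseteq> J \<longrightarrow> J = M \<or> J = UNIV)"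

definition ideal_gen :: "'r::comm_ring_1 set \<Rightarrow> 'r set" where
  "ideal_gen S = \<Inter> {I. is_ideal I \<and> S \<subseteq> I}"

definition ideal_mult :: "'r::comm_ring_1 set \<Rightarrow> 'r set \<Rightarrow> 'r set" where
  "ideal_mult I J = ideal_gen {x * y | x y. x \<in> I \<and> y \<in> J}"

fun ideal_pow :: "'r::comm_ring_1 set \<Rightarrow> nat \<Rightarrow> 'r set" where
  "ideal_pow I 0 = UNIV"
| "ideal_pow I (Suc n) = ideal_mult I (ideal_pow I n)"

definition ideal_radical :: "'r::comm_ring_1 set \<Rightarrow> 'r set" where
  "ideal_radical I = {x. \<exists>n. x ^ n \<in> I}"

definition primary_ideal :: "'r::comm_ring_1 set \<Rightarrow> bool" where
  "primary_ideal Q \<longleftrightarrow> is_ideal Q \<and> Q \<noteq> UNIV \<and>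
     (\<forall>x y. x * y \<in> Q \<and> x \<notin> Q \<longrightarrow> (\<exists>n. y ^ n \<in> Q))"

definition P_primary :: "'r::comm_ring_1 set \<Rightarrow> 'r set \<Rightarrow> bool" where
  "P_primary P Q \<longleftrightarrow> primary_ideal Q \<and> ideal_radical Q = P"

text \<open>Elements of Frac(R/P) are represented by pairs (a,b) with b \<notin> P,
  (a,b) ~ (c,d) iff a*d - c*b \<in> P.\<close>
definition frac_reps :: "'r::comm_ring_1 set \<Rightarrow> ('r \<times> 'r) set" where
  "frac_reps P = {(a, b). b \<notin> P}"

definition frac_eq :: "'r::comm_ring_1 set \<Rightarrow> 'r \<times> 'r \<Rightarrow> 'r \<times> 'r \<Rightarrow> bool" where
  "frac_eq P x y \<longleftrightarrow> fst x * snd y - fst y * snd x \<in> P"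

text \<open>Representatives of the R/P-subalgebra of Frac(R/P) generated by S.\<close>
inductive_set frac_alg_gen :: "('r::comm_ring_1 \<times> 'r) set \<Rightarrow> ('r \<times> 'r) set"
  for S :: "('r \<times> 'r) set" where
  base: "(r, 1) \<in> frac_alg_gen S"
| gen: "g \<in> S \<Longrightarrow> g \<in> frac_alg_gen S"
| add: "(a, b) \<in> frac_alg_gen S \<Longrightarrow> (c, d) \<in> frac_alg_gen S \<Longrightarrow> (a * d + c * b, b * d) \<in> frac_alg_gen S"
| mult: "(a, b) \<in> frac_alg_gen S \<Longrightarrow> (c, d) \<in> frac_alg_gen S \<Longrightarrow> (a * c, b * d) \<in> frac_alg_gen S"

definition G_ideal :: "'r::comm_ring_1 set \<Rightarrow> bool" where
  "G_ideal P \<longleftrightarrow> prime_ideal P \<and>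
     (\<exists>S. finite S \<and> S \<subseteq> frac_reps P \<and>
        (\<forall>x\<in>frac_reps P. \<exists>y\<in>frac_alg_gen S. frac_eq P x y))"

definition contract :: "'r::comm_ring_1 poly set \<Rightarrow> 'r set" where
  "contract I = {r. [:r:] \<in> I}"

definition power_stable :: "'r::comm_ring_1 poly set \<Rightarrow> bool" where
  "power_stable I \<longleftrightarrow> (\<forall>t\<ge>1. contract (ideal_pow I t) = ideal_pow (contract I) t)"

text \<open>K[[Y,Z,W]] is modelled as the iterated power series ring ((K[[Y]])[[Z]])[[W]].
  The coefficient of Y^a Z^b W^c in f is coeff3 f a b c.\<close>
type_synonym 'k ps3 = "'k fps fps fps"

definition coeff3 :: "'k::comm_ring_1 ps3 \<Rightarrow> nat \<Rightarrow> nat \<Rightarrow> nat \<Rightarrow> 'k" where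
  "coeff3 f a b c = fps_nth (fps_nth (fps_nth f c) b) a"

definition var_Y :: "'k::comm_ring_1 ps3" where "var_Y = fps_const (fps_const fps_X)"
definition var_Z :: "'k::comm_ring_1 ps3" where "var_Z = fps_const fps_X"
definition var_W :: "'k::comm_ring_1 ps3" where "var_W = fps_X"

text \<open>The K-algebra homomorphism Y \<mapsto> T^4, Z \<mapsto> T^5, W \<mapsto> T^3 (substitution).\<close>
definition phi :: "'k::comm_ring_1 ps3 \<Rightarrow> 'k fps" where
  "phi f = Abs_fps (\<lambda>n. \<Sum>(a, b, c) \<in> {(a, b, c). 4 * a + 5 * b + 3 * c = n}. coeff3 f a b c)"

end

theory Submission
  imports Defs
begin


lemma coeff3_add[simp]: "coeff3 (f + g) a b c = coeff3 f a b c + coeff3 g a b c"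
  by (simp add: coeff3_def)
lemma coeff3_diff[simp]: "coeff3 (f - g) a b c = coeff3 f a b c - coeff3 g a b c"
  by (simp add: coeff3_def)
lemma coeff3_uminus[simp]: "coeff3 (- f) a b c = - coeff3 f a b c"
  by (simp add: coeff3_def)
lemma coeff3_0[simp]: "coeff3 0 a b c = 0"
  by (simp add: coeff3_def)
lemma coeff3_1: "coeff3 1 a b c = (if a = 0 \<and> b = 0 \<and> c = 0 then 1 else 0)"
  by (simp add: coeff3_def fps_one_nth)
lemma coeff3_ext: "(\<And>a b c. coeff3 f a b c = coeff3 g a b c) \<Longrightarrow> f = g"
  unfolding coeff3_def by (intro fps_ext) auto

lemma coeff3_mult: "coeff3 (f * g) a b c =
  (\<Sum>k=0..c. \<Sum>j=0..b. \<Sum>i=0..a. coeff3 f i j k * coeff3 g (a - i) (b - j) (c - k))"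
  unfolding coeff3_def by (simp add: fps_mult_nth fps_sum_nth)

definition mk3 :: "(nat \<Rightarrow> nat \<Rightarrow> nat \<Rightarrow> 'k::comm_ring_1) \<Rightarrow> 'k ps3" where
  "mk3 F = Abs_fps (\<lambda>c. Abs_fps (\<lambda>b. Abs_fps (\<lambda>a. F a b c)))"
lemma coeff3_mk3[simp]: "coeff3 (mk3 F) a b c = F a b c"
  by (simp add: mk3_def coeff3_def)


definition box3 :: "nat \<Rightarrow> nat \<Rightarrow> nat \<Rightarrow> (nat \<times> nat \<times> nat) set" where
  "box3 a b c = {0..a} \<times> {0..b} \<times> {0..c}"

lemma coeff3_mult': "coeff3 (f * g) a b c =
  (\<Sum>(i,j,k)\<in>box3 a b c. coeff3 f i j k * coeff3 g (a - i) (b - j) (c - k))"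
proof -
  have "coeff3 (f * g) a b c = (\<Sum>i=0..a. \<Sum>j=0..b. \<Sum>k=0..c. coeff3 f i j k * coeff3 g (a - i) (b - j) (c - k))"
  proof -
    let ?X = "\<lambda>i j k. coeff3 f i j k * coeff3 g (a - i) (b - j) (c - k)"
    have "(\<Sum>k=0..c. \<Sum>j=0..b. \<Sum>i=0..a. ?X i j k) = (\<Sum>k=0..c. \<Sum>i=0..a. \<Sum>j=0..b. ?X i j k)"
      by (rule sum.cong[OF refl], rule sum.swap)
    also have "\<dots> = (\<Sum>i=0..a. \<Sum>k=0..c. \<Sum>j=0..b. ?X i j k)" by (rule sum.swap)
    also have "\<dots> = (\<Sum>i=0..a. \<Sum>j=0..b. \<Sum>k=0..c. ?X i j k)"
      by (rule sum.cong[OF refl], rule sum.swap)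
    finally show ?thesis unfolding coeff3_mult .
  qed
  also have "\<dots> = (\<Sum>i=0..a. \<Sum>(j,k)\<in>{0..b}\<times>{0..c}. coeff3 f i j k * coeff3 g (a - i) (b - j) (c - k))"
    by (simp add: sum.cartesian_product)
  also have "\<dots> = (\<Sum>(i,j,k)\<in>box3 a b c. coeff3 f i j k * coeff3 g (a - i) (b - j) (c - k))"
    unfolding box3_def by (subst sum.cartesian_product) (simp add: case_prod_beta)
  finally show ?thesis .
qed

definition wt :: "nat \<times> nat \<times> nat \<Rightarrow> nat" where "wt m = (case m of (a,b,c) \<Rightarrow> 4*a+5*b+3*c)"
definition Bw :: "nat \<Rightarrow> (nat \<times> nat \<times> nat) set" where "Bw n = {(a,b,c). 4*a+5*b+3*c = n}"

lemma finite_Bw[simp]: "finite (Bw n)"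
proof -
  have "Bw n \<subseteq> {0..n} \<times> {0..n} \<times> {0..n}" unfolding Bw_def by auto
  thus ?thesis by (rule finite_subset) auto
qed

lemma phi_nth: "phi f $ n = (\<Sum>(a,b,c)\<in>Bw n. coeff3 f a b c)"
  unfolding phi_def Bw_def by simp

lemma phi_add[simp]: "phi (f + g) = phi f + phi g"
  by (rule fps_ext) (simp add: phi_nth case_prod_beta sum.distrib)
lemma phi_diff[simp]: "phi (f - g) = phi f - phi g"
  by (rule fps_ext) (simp add: phi_nth case_prod_beta sum_subtractf)
lemma phi_uminus[simp]: "phi (- f) = - phi f"
  by (rule fps_ext) (simp add: phi_nth case_prod_beta sum_negf)
lemma phi_0[simp]: "phi 0 = 0"
  by (rule fps_ext) (simp add: phi_nth case_prod_beta)

definition Pairs :: "nat \<Rightarrow> ((nat \<times> nat \<times> nat) \<times> (nat \<times> nat \<times> nat)) set" where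
  "Pairs n = {(m1, m2). wt m1 + wt m2 = n}"

lemma finite_Pairs: "finite (Pairs n)"
proof -
  have "Pairs n \<subseteq> ({0..n} \<times> {0..n} \<times> {0..n}) \<times> ({0..n} \<times> {0..n} \<times> {0..n})"
    unfolding Pairs_def wt_def by auto
  thus ?thesis by (rule finite_subset) auto
qed

lemma phi_mult[simp]: "phi (f * g) = phi f * phi g"
proof (rule fps_ext)
  fix n
  define F where "F = (\<lambda>(a,b,c). coeff3 f a b c)"
  define G where "G = (\<lambda>(a,b,c). coeff3 g a b c)"
  have L: "phi (f * g) $ n = (\<Sum>(m1,m2)\<in>Pairs n. F m1 * G m2)"
  proof -
    have "phi (f * g) $ n = (\<Sum>(a,b,c)\<in>Bw n. \<Sum>(i,j,k)\<in>box3 a b c. coeff3 f i j k * coeff3 g (a - i) (b - j) (c - k))"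
      unfolding phi_nth coeff3_mult' by (simp add: case_prod_beta)
    also have "\<dots> = (\<Sum>(m, m1)\<in>Sigma (Bw n) (\<lambda>(a,b,c). box3 a b c).
        (case (m, m1) of ((a,b,c),(i,j,k)) \<Rightarrow> coeff3 f i j k * coeff3 g (a - i) (b - j) (c - k)))"
      by (subst sum.Sigma[symmetric]) (auto simp: box3_def split_def intro!: sum.cong)
    also have "\<dots> = (\<Sum>(m1,m2)\<in>Pairs n. F m1 * G m2)"
      apply (rule sum.reindex_bij_witness[where i = "\<lambda>((i,j,k),(i',j',k')). ((i+i',j+j',k+k'),(i,j,k))"
             and j = "\<lambda>((a,b,c),(i,j,k)). ((i,j,k),(a-i,b-j,c-k))"])
      by (auto simp: Pairs_def Bw_def box3_def wt_def F_def G_def)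
    finally show ?thesis .
  qed
  have R: "(phi f * phi g) $ n = (\<Sum>(m1,m2)\<in>Pairs n. F m1 * G m2)"
  proof -
    have "(phi f * phi g) $ n = (\<Sum>p=0..n. (\<Sum>m1\<in>Bw p. F m1) * (\<Sum>m2\<in>Bw (n - p). G m2))"
      unfolding fps_mult_nth phi_nth F_def G_def by simp
    also have "\<dots> = (\<Sum>p=0..n. \<Sum>(m1,m2)\<in>Bw p \<times> Bw (n - p). F m1 * G m2)"
      by (simp add: sum_product sum.cartesian_product)
    also have "\<dots> = (\<Sum>(p, mm)\<in>Sigma {0..n} (\<lambda>p. Bw p \<times> Bw (n - p)). (case mm of (m1,m2) \<Rightarrow> F m1 * G m2))"
      by (subst sum.Sigma[symmetric]) (auto simp: split_def intro!: sum.cong)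
    also have "\<dots> = (\<Sum>(m1,m2)\<in>Pairs n. F m1 * G m2)"
      apply (rule sum.reindex_bij_witness[where i = "\<lambda>(m1,m2). (wt m1, (m1,m2))" and j = "snd"])
      by (auto simp: Pairs_def Bw_def wt_def)
    finally show ?thesis .
  qed
  show "phi (f * g) $ n = (phi f * phi g) $ n" using L R by simp
qed

definition mon :: "nat \<times> nat \<times> nat \<Rightarrow> 'k::comm_ring_1 ps3" where
  "mon m = (case m of (a,b,c) \<Rightarrow> var_Y ^ a * var_Z ^ b * var_W ^ c)"

lemma coeff3_mon: "coeff3 (mon m :: 'k::comm_ring_1 ps3) a b c = (if m = (a,b,c) then 1 else 0)"
proof -
  obtain x y z where m: "m = (x,y,z)" by (cases m) auto
  have "(mon m :: 'k ps3) = fps_const (fps_const (fps_X ^ x) * fps_X ^ y) * fps_X ^ z"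
    by (simp add: m mon_def var_Y_def var_Z_def var_W_def fps_const_mult[symmetric] del: fps_const_mult)
  thus ?thesis unfolding coeff3_def
    by (auto simp: m fps_X_power_mult_right_nth fps_mult_left_const_nth)
qed

lemma mon_mult: "mon (a,b,c) * mon (a',b',c') = (mon (a+a',b+b',c+c') :: 'k::comm_ring_1 ps3)"
  by (simp add: mon_def power_add algebra_simps)

lemma var_Y_mon: "var_Y = mon (1,0,0)" by (simp add: mon_def)
lemma var_Z_mon: "var_Z = mon (0,1,0)" by (simp add: mon_def)
lemma var_W_mon: "var_W = mon (0,0,1)" by (simp add: mon_def)
lemma one_mon: "1 = mon (0,0,0)" by (simp add: mon_def)

lemma phi_mon: "phi (mon m :: 'k::comm_ring_1 ps3) = fps_X ^ wt m"
proof (rule fps_ext)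
  fix n
  have "phi (mon m :: 'k ps3) $ n = (\<Sum>x\<in>Bw n. if x = m then 1 else 0)"
    unfolding phi_nth by (rule sum.cong) (auto simp: coeff3_mon)
  also have "\<dots> = (if m \<in> Bw n then 1 else 0)" by (simp add: sum.delta')
  finally show "phi (mon m :: 'k ps3) $ n = (fps_X ^ wt m :: 'k fps) $ n"
    by (auto simp: Bw_def wt_def split: prod.splits)
qed

lemma phi_1[simp]: "phi 1 = 1"
  unfolding one_mon phi_mon by (simp add: wt_def)
lemma phi_Y: "phi var_Y = fps_X ^ 4"
  unfolding var_Y_mon phi_mon by (simp add: wt_def)
lemma phi_Z: "phi var_Z = fps_X ^ 5"
  unfolding var_Z_mon phi_mon by (simp add: wt_def)
lemma phi_W: "phi var_W = fps_X ^ 3"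
  unfolding var_W_mon phi_mon by (simp add: wt_def)
lemma phi_power[simp]: "phi (f ^ n) = phi f ^ n"
  by (induction n) simp_all

section \<open>Ideals\<close>

lemma ideal_gen_ideal: "is_ideal (ideal_gen S)"
  unfolding is_ideal_def ideal_gen_def by auto
lemma ideal_gen_sub: "S \<subseteq> ideal_gen S"
  unfolding ideal_gen_def by auto
lemma ideal_gen_min: "is_ideal I \<Longrightarrow> S \<subseteq> I \<Longrightarrow> ideal_gen S \<subseteq> I"
  unfolding ideal_gen_def by auto

lemma ideal_add: "is_ideal I \<Longrightarrow> x \<in> I \<Longrightarrow> y \<in> I \<Longrightarrow> x + y \<in> I"
  unfolding is_ideal_def by auto
lemma ideal_mult: "is_ideal I \<Longrightarrow> x \<in> I \<Longrightarrow> r * x \<in> I"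
  unfolding is_ideal_def by auto
lemma ideal_mult_right: "is_ideal I \<Longrightarrow> x \<in> I \<Longrightarrow> x * r \<in> I"
  unfolding is_ideal_def by (metis mult.commute)
lemma ideal_uminus: "is_ideal I \<Longrightarrow> x \<in> I \<Longrightarrow> - x \<in> I"
  using ideal_mult[of I x "-1"] by simp
lemma ideal_diff: "is_ideal I \<Longrightarrow> x \<in> I \<Longrightarrow> y \<in> I \<Longrightarrow> x - y \<in> I"
  using ideal_add[of I x "-y"] ideal_uminus[of I y] by simp
lemma ideal_zero: "is_ideal I \<Longrightarrow> 0 \<in> I"
  unfolding is_ideal_def by auto
lemma ideal_UNIV: "is_ideal I \<Longrightarrow> 1 \<in> I \<Longrightarrow> I = UNIV"
  using ideal_mult[of I 1] by auto

lemma kernel_ideal: "is_ideal {f :: 'k::comm_ring_1 ps3. phi f = 0}"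
  unfolding is_ideal_def by auto

lemma kernel_prime: "prime_ideal {f :: 'k::field ps3. phi f = 0}"
proof -
  have "(1::'k ps3) \<notin> {f. phi f = 0}" by simp
  hence "{f::'k ps3. phi f = 0} \<noteq> UNIV" by blast
  thus ?thesis unfolding prime_ideal_def using kernel_ideal by auto
qed

section \<open>Reduction\<close>

definition g1 :: "'k::comm_ring_1 ps3" where "g1 = var_W ^ 3 - var_Y * var_Z"
definition g2 :: "'k::comm_ring_1 ps3" where "g2 = var_Y ^ 2 - var_W * var_Z"
definition g3 :: "'k::comm_ring_1 ps3" where "g3 = var_Z ^ 2 - var_W ^ 2 * var_Y"

lemma g1_mon: "g1 = mon (0,0,3) - mon (1,1,0)" by (simp add: g1_def mon_def)
lemma g2_mon: "g2 = mon (2,0,0) - mon (0,1,1)" by (simp add: g2_def mon_def mult.commute)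
lemma g3_mon: "g3 = mon (0,2,0) - mon (1,0,2)" by (simp add: g3_def mon_def mult.commute)

definition sidx :: "nat \<Rightarrow> nat \<times> nat \<times> nat" where
  "sidx n = (if n mod 3 = 0 then (0,0,n div 3) else if n mod 3 = 1 then (1,0,(n-4) div 3)
             else (0,1,(n-5) div 3))"

lemma Red: "\<exists>q1 q2 q3. mon (a,b,c) - mon (sidx (wt (a,b,c))) = q1 * g1 + q2 * g2 + (q3 * g3 :: 'k::comm_ring_1 ps3)"
proof (induction "a+b" arbitrary: a b c rule: less_induct)
  case less
  show ?case
  proof (cases "a \<ge> 2")
    case True
    have e: "mon (a,b,c) = mon (a-2,b,c) * g2 + (mon (a-2,b+1,c+1) :: 'k ps3)"
    proof -
      have "Suc (Suc (a-2)) = a" using True by arith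
      thus ?thesis by (simp add: g2_mon algebra_simps mon_mult)
    qed
    have w: "wt (a-2,b+1,c+1) = wt (a,b,c)" using True by (simp add: wt_def)
    obtain q1 q2 q3 where q: "mon (a-2,b+1,c+1) - mon (sidx (wt (a-2,b+1,c+1))) = q1 * g1 + q2 * g2 + (q3 * g3 :: 'k ps3)"
      proof -
      have "a-2 + (b+1) < a + b" using True by arith
      from less[OF this, of "c+1"] that show ?thesis by blast
    qed
    show ?thesis
      by (rule exI[of _ q1], rule exI[of _ "q2 + mon (a-2,b,c)"], rule exI[of _ q3])
         (use e w q in \<open>simp add: algebra_simps\<close>)
  next
    case F1: False
    show ?thesis
    proof (cases "a \<ge> 1 \<and> b \<ge> 1")
      case True
      have e: "mon (a,b,c) = - mon (a-1,b-1,c) * g1 + (mon (a-1,b-1,c+3) :: 'k ps3)"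
        using True by (simp add: g1_mon algebra_simps mon_mult le_add_diff_inverse2)
      have w: "wt (a-1,b-1,c+3) = wt (a,b,c)" using True by (simp add: wt_def) arith
      obtain q1 q2 q3 where q: "mon (a-1,b-1,c+3) - mon (sidx (wt (a-1,b-1,c+3))) = q1 * g1 + q2 * g2 + (q3 * g3 :: 'k ps3)"
        proof -
      have "a-1 + (b-1) < a + b" using True by arith
      from less[OF this, of "c+3"] that show ?thesis by blast
    qed
      show ?thesis
        by (rule exI[of _ "q1 - mon (a-1,b-1,c)"], rule exI[of _ q2], rule exI[of _ q3])
           (use e w q in \<open>simp add: algebra_simps\<close>)
    next
      case F2: False
      show ?thesis
      proof (cases "b \<ge> 2")
        case True
        have e: "mon (a,b,c) = mon (a,b-2,c) * g3 + (mon (a+1,b-2,c+2) :: 'k ps3)"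
        proof -
          have "Suc (Suc (b-2)) = b" using True by arith
          thus ?thesis by (simp add: g3_mon algebra_simps mon_mult)
        qed
        have w: "wt (a+1,b-2,c+2) = wt (a,b,c)" using True by (simp add: wt_def)
        obtain q1 q2 q3 where q: "mon (a+1,b-2,c+2) - mon (sidx (wt (a+1,b-2,c+2))) = q1 * g1 + q2 * g2 + (q3 * g3 :: 'k ps3)"
          proof -
      have "a+1 + (b-2) < a + b" using True by arith
      from less[OF this, of "c+2"] that show ?thesis by blast
    qed
        show ?thesis
          by (rule exI[of _ q1], rule exI[of _ q2], rule exI[of _ "q3 + mon (a,b-2,c)"])
             (use e w q in \<open>simp add: algebra_simps\<close>)
      next
        case False
        with F1 F2 have "(a = 0 \<and> b = 0) \<or> (a = 1 \<and> b = 0) \<or> (a = 0 \<and> b = 1)" by auto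
        hence "sidx (wt (a,b,c)) = (a,b,c)"
          by (auto simp: sidx_def wt_def)
        thus ?thesis by (intro exI[of _ 0]) simp
      qed
    qed
  qed
qed

definition c3 :: "'k::comm_ring_1 ps3 \<Rightarrow> nat \<times> nat \<times> nat \<Rightarrow> 'k" where
  "c3 f m = (case m of (a,b,c) \<Rightarrow> coeff3 f a b c)"

lemma sum_lemma:
  fixes g :: "'k::comm_ring_1 ps3" and Q :: "nat\<times>nat\<times>nat \<Rightarrow> 'k ps3"
  assumes hom: "\<And>i j k. coeff3 g i j k \<noteq> 0 \<Longrightarrow> wt (i,j,k) = d"
  shows "coeff3 (mk3 (\<lambda>a b c. \<Sum>m\<in>Bw (wt (a,b,c) + d). c3 f m * coeff3 (Q m) a b c) * g) x y z
       = (\<Sum>m\<in>Bw (wt (x,y,z)). c3 f m * coeff3 (Q m * g) x y z)"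
proof -
  let ?n = "wt (x,y,z)"
  have "coeff3 (mk3 (\<lambda>a b c. \<Sum>m\<in>Bw (wt (a,b,c) + d). c3 f m * coeff3 (Q m) a b c) * g) x y z
     = (\<Sum>(i,j,k)\<in>box3 x y z. (\<Sum>m\<in>Bw (wt (i,j,k) + d). c3 f m * coeff3 (Q m) i j k) * coeff3 g (x-i) (y-j) (z-k))"
    unfolding coeff3_mult' by simp
  also have "\<dots> = (\<Sum>(i,j,k)\<in>box3 x y z. \<Sum>m\<in>Bw ?n. c3 f m * (coeff3 (Q m) i j k * coeff3 g (x-i) (y-j) (z-k)))"
  proof (rule sum.cong[OF refl], clarify)
    fix i j k assume ijk: "(i,j,k) \<in> box3 x y z"
    show "(\<Sum>m\<in>Bw (wt (i,j,k) + d). c3 f m * coeff3 (Q m) i j k) * coeff3 g (x-i) (y-j) (z-k)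
        = (\<Sum>m\<in>Bw ?n. c3 f m * (coeff3 (Q m) i j k * coeff3 g (x-i) (y-j) (z-k)))"
    proof (cases "coeff3 g (x-i) (y-j) (z-k) = 0")
      case True thus ?thesis by simp
    next
      case False
      from hom[OF False] ijk have "wt (i,j,k) + d = ?n" by (auto simp: wt_def box3_def)
      thus ?thesis by (simp add: sum_distrib_right mult.assoc)
    qed
  qed
  also have "\<dots> = (\<Sum>m\<in>Bw ?n. \<Sum>(i,j,k)\<in>box3 x y z. c3 f m * (coeff3 (Q m) i j k * coeff3 g (x-i) (y-j) (z-k)))"
    by (simp only: split_def, rule sum.swap)
  also have "\<dots> = (\<Sum>m\<in>Bw ?n. c3 f m * coeff3 (Q m * g) x y z)"
    unfolding coeff3_mult' by (simp add: sum_distrib_left case_prod_beta)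
  finally show ?thesis .
qed

lemma hom_g1: "coeff3 (g1::'k::comm_ring_1 ps3) i j k \<noteq> 0 \<Longrightarrow> wt (i,j,k) = 9"
  by (auto simp: g1_mon coeff3_mon wt_def split: if_splits)
lemma hom_g2: "coeff3 (g2::'k::comm_ring_1 ps3) i j k \<noteq> 0 \<Longrightarrow> wt (i,j,k) = 8"
  by (auto simp: g2_mon coeff3_mon wt_def split: if_splits)
lemma hom_g3: "coeff3 (g3::'k::comm_ring_1 ps3) i j k \<noteq> 0 \<Longrightarrow> wt (i,j,k) = 10"
  by (auto simp: g3_mon coeff3_mon wt_def split: if_splits)

lemma kernel_in_gen:
  fixes f :: "'k::comm_ring_1 ps3"
  assumes "phi f = 0"
  shows "f \<in> ideal_gen {g1, g2, g3}"
proof -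
  have "\<forall>m. \<exists>q. mon m - mon (sidx (wt m)) = fst q * g1 + fst (snd q) * g2 + (snd (snd q) * g3 :: 'k ps3)"
  proof
    fix m :: "nat\<times>nat\<times>nat"
    obtain a b c where m: "m = (a,b,c)" by (cases m) auto
    from Red[of a b c] obtain q1 q2 q3 where
      "mon (a,b,c) - mon (sidx (wt (a,b,c))) = q1 * g1 + q2 * g2 + (q3 * g3 :: 'k ps3)" by blast
    thus "\<exists>q. mon m - mon (sidx (wt m)) = fst q * g1 + fst (snd q) * g2 + (snd (snd q) * g3 :: 'k ps3)"
      by (intro exI[of _ "(q1,q2,q3)"]) (simp add: m)
  qed
  then obtain q where q: "\<And>m. mon m - mon (sidx (wt m)) = fst (q m) * g1 + fst (snd (q m)) * g2 + (snd (snd (q m)) * g3 :: 'k ps3)"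
    by metis
  define A1 where "A1 = mk3 (\<lambda>a b c. \<Sum>m\<in>Bw (wt (a,b,c) + 9). c3 f m * coeff3 (fst (q m)) a b c)"
  define A2 where "A2 = mk3 (\<lambda>a b c. \<Sum>m\<in>Bw (wt (a,b,c) + 8). c3 f m * coeff3 (fst (snd (q m))) a b c)"
  define A3 where "A3 = mk3 (\<lambda>a b c. \<Sum>m\<in>Bw (wt (a,b,c) + 10). c3 f m * coeff3 (snd (snd (q m))) a b c)"
  have "f = A1 * g1 + A2 * g2 + A3 * g3"
  proof (rule coeff3_ext)
    fix x y z
    let ?n = "wt (x,y,z)"
    have s1: "coeff3 (A1 * g1) x y z = (\<Sum>m\<in>Bw ?n. c3 f m * coeff3 (fst (q m) * g1) x y z)"
      unfolding A1_def by (rule sum_lemma[OF hom_g1])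
    have s2: "coeff3 (A2 * g2) x y z = (\<Sum>m\<in>Bw ?n. c3 f m * coeff3 (fst (snd (q m)) * g2) x y z)"
      unfolding A2_def by (rule sum_lemma[OF hom_g2])
    have s3: "coeff3 (A3 * g3) x y z = (\<Sum>m\<in>Bw ?n. c3 f m * coeff3 (snd (snd (q m)) * g3) x y z)"
      unfolding A3_def by (rule sum_lemma[OF hom_g3])
    have "coeff3 (A1 * g1 + A2 * g2 + A3 * g3) x y z =
       (\<Sum>m\<in>Bw ?n. c3 f m * (coeff3 (fst (q m) * g1) x y z + coeff3 (fst (snd (q m)) * g2) x y z + coeff3 (snd (snd (q m)) * g3) x y z))"
      unfolding coeff3_add s1 s2 s3
      by (simp add: sum.distrib distrib_left)
    also have "\<dots> = (\<Sum>m\<in>Bw ?n. c3 f m * coeff3 (mon m - mon (sidx ?n)) x y z)"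
    proof (rule sum.cong[OF refl])
      fix m assume "m \<in> Bw ?n"
      hence "wt m = ?n" by (auto simp: Bw_def wt_def)
      thus "c3 f m * (coeff3 (fst (q m) * g1) x y z + coeff3 (fst (snd (q m)) * g2) x y z + coeff3 (snd (snd (q m)) * g3) x y z)
          = c3 f m * coeff3 (mon m - mon (sidx ?n)) x y z"
        using q[of m] by simp
    qed
    also have "\<dots> = (\<Sum>m\<in>Bw ?n. c3 f m * (if m = (x,y,z) then 1 else 0)) - (\<Sum>m\<in>Bw ?n. c3 f m) * (if sidx ?n = (x,y,z) then 1 else 0)"
      by (simp add: coeff3_mon right_diff_distrib sum_subtractf sum_distrib_right)
    also have "(\<Sum>m\<in>Bw ?n. c3 f m) = phi f $ ?n"
      unfolding phi_nth c3_def by simp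
    also have "(\<Sum>m\<in>Bw ?n. c3 f m * (if m = (x,y,z) then 1 else 0)) = c3 f (x,y,z)"
    proof -
      have "(x,y,z) \<in> Bw ?n" by (simp add: Bw_def wt_def)
      moreover have "(\<lambda>m. c3 f m * (if m = (x,y,z) then 1 else 0)) = (\<lambda>m. if m = (x,y,z) then c3 f m else 0)"
        by auto
      ultimately show ?thesis by (simp only: sum.delta' finite_Bw) simp
    qed
    finally show "coeff3 f x y z = coeff3 (A1 * g1 + A2 * g2 + A3 * g3) x y z"
      using assms by (simp add: c3_def)
  qed
  moreover have "g1 \<in> ideal_gen {g1,g2,g3}" "g2 \<in> ideal_gen {g1,g2,g3}" "g3 \<in> ideal_gen {g1,g2,g3}"
    using ideal_gen_sub[of "{g1,g2,g3}"] by auto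
  ultimately show ?thesis
    using ideal_gen_ideal ideal_add ideal_mult by metis
qed




lemma phi_g1: "phi g1 = 0" by (simp add: g1_def phi_Y phi_Z phi_W power_add[symmetric] power_mult[symmetric])
lemma phi_g2: "phi g2 = 0" by (simp add: g2_def phi_Y phi_Z phi_W power_add[symmetric] power_mult[symmetric])
lemma phi_g3: "phi g3 = 0" by (simp add: g3_def phi_Y phi_Z phi_W power_add[symmetric] power_mult[symmetric])

lemma kernel_eq_gen: "{f :: 'k::comm_ring_1 ps3. phi f = 0} = ideal_gen {g1, g2, g3}"
proof
  show "{f :: 'k ps3. phi f = 0} \<subseteq> ideal_gen {g1, g2, g3}" using kernel_in_gen by blast
  show "ideal_gen {g1, g2, g3} \<subseteq> {f :: 'k ps3. phi f = 0}"
    by (rule ideal_gen_min[OF kernel_ideal]) (auto simp: phi_g1 phi_g2 phi_g3)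
qed

section \<open>Order ideals\<close>

definition Ord :: "nat \<Rightarrow> 'k::comm_ring_1 ps3 set" where
  "Ord n = {g. \<forall>a b c. a + b + c < n \<longrightarrow> coeff3 g a b c = 0}"

lemma Ord_mult: "g \<in> Ord i \<Longrightarrow> h \<in> Ord j \<Longrightarrow> g * h \<in> Ord (i + j)"
  unfolding Ord_def
proof (clarify)
  fix a b c assume g: "\<forall>a b c. a + b + c < i \<longrightarrow> coeff3 g a b c = 0"
    and h: "\<forall>a b c. a + b + c < j \<longrightarrow> coeff3 h a b c = 0" and abc: "a + b + c < i + j"
  show "coeff3 (g * h) a b c = 0"
    unfolding coeff3_mult'
  proof (rule sum.neutral, clarify)
    fix x y z assume "(x,y,z) \<in> box3 a b c"
    hence "x \<le> a" "y \<le> b" "z \<le> c" by (auto simp: box3_def)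
    show "coeff3 g x y z * coeff3 h (a - x) (b - y) (c - z) = 0"
    proof (cases "x + y + z < i")
      case True thus ?thesis using g by simp
    next
      case False
      hence "(a - x) + (b - y) + (c - z) < j" using abc \<open>x \<le> a\<close> \<open>y \<le> b\<close> \<open>z \<le> c\<close> by arith
      thus ?thesis using h by simp
    qed
  qed
qed

lemma Ord_0: "Ord 0 = UNIV" by (simp add: Ord_def)

lemma Ord_ideal: "is_ideal (Ord n)"
  unfolding is_ideal_def
proof (intro conjI ballI allI)
  show "0 \<in> Ord n" by (simp add: Ord_def)
  show "x + y \<in> Ord n" if "x \<in> Ord n" "y \<in> Ord n" for x y using that by (simp add: Ord_def)
  show "r * x \<in> Ord n" if "x \<in> Ord n" for r x
    using Ord_mult[of r 0 x n] that by (simp add: Ord_0)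
qed

lemma Bw_0: "Bw 0 = {(0,0,0)}" unfolding Bw_def by auto
lemma Bw_3: "Bw 3 = {(0,0,1)}"
proof -
  have "4*a+5*b+3*c = (3::nat) \<Longrightarrow> a = 0 \<and> b = 0 \<and> c = 1" for a b c by arith
  thus ?thesis unfolding Bw_def by auto
qed
lemma Bw_4: "Bw 4 = {(1,0,0)}"
proof -
  have "4*a+5*b+3*c = (4::nat) \<Longrightarrow> a = 1 \<and> b = 0 \<and> c = 0" for a b c by arith
  thus ?thesis unfolding Bw_def by auto
qed
lemma Bw_5: "Bw 5 = {(0,1,0)}"
proof -
  have "4*a+5*b+3*c = (5::nat) \<Longrightarrow> a = 0 \<and> b = 1 \<and> c = 0" for a b c by arith
  thus ?thesis unfolding Bw_def by auto
qed

lemma kernel_Ord2: "phi f = 0 \<Longrightarrow> f \<in> Ord 2"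
proof -
  assume f: "phi f = 0"
  have "phi f $ 0 = 0" "phi f $ 3 = 0" "phi f $ 4 = 0" "phi f $ 5 = 0" using f by simp_all
  hence z: "coeff3 f 0 0 0 = 0" "coeff3 f 0 0 1 = 0" "coeff3 f 1 0 0 = 0" "coeff3 f 0 1 0 = 0"
    unfolding phi_nth Bw_0 Bw_3 Bw_4 Bw_5 by simp_all
  show ?thesis unfolding Ord_def
  proof (intro CollectI allI impI)
    fix a b c :: nat assume "a + b + c < 2"
    hence "(a = 0 \<and> b = 0 \<and> c = 0) \<or> (a = 0 \<and> b = 0 \<and> c = 1) \<or> (a = 1 \<and> b = 0 \<and> c = 0) \<or> (a = 0 \<and> b = 1 \<and> c = 0)"
      by arith
    thus "coeff3 f a b c = 0" using z by (elim disjE) simp_all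
  qed
qed

lemma ideal_mult_sub: "is_ideal P \<Longrightarrow> ideal_mult P J \<subseteq> P"
  unfolding ideal_mult_def by (rule ideal_gen_min) (auto intro: ideal_mult_right)

lemma ideal_mult_in: "x \<in> I \<Longrightarrow> y \<in> J \<Longrightarrow> x * y \<in> ideal_mult I J"
  unfolding ideal_mult_def by (rule subsetD[OF ideal_gen_sub]) blast

lemma ideal_mult_Ord: "I \<subseteq> Ord i \<Longrightarrow> J \<subseteq> Ord j \<Longrightarrow> ideal_mult I J \<subseteq> Ord (i + j)"
  unfolding ideal_mult_def by (rule ideal_gen_min[OF Ord_ideal]) (auto intro: Ord_mult)

definition hh :: "'k::comm_ring_1 ps3" where
  "hh = mon (0,0,5) - (mon (1,1,2) + mon (1,1,2) + mon (1,1,2)) + mon (3,0,1) + mon (0,3,0)"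
lemma phi_hh: "phi hh = 0"
proof -
  have w: "wt (0,0,5) = 15" "wt (1,1,2) = 15" "wt (3,0,1) = 15" "wt (0,3,0) = 15" by (simp_all add: wt_def)
  show ?thesis unfolding hh_def phi_add phi_diff phi_mon w by (simp only: diff_add_eq_diff_diff_swap) simp
qed

lemma hh_not_Ord4: "(hh :: 'k::comm_ring_1 ps3) \<notin> Ord 4"
proof
  assume "(hh :: 'k ps3) \<in> Ord 4"
  hence "\<forall>a b c. a+b+c < 4 \<longrightarrow> coeff3 (hh :: 'k ps3) a b c = 0" unfolding Ord_def by simp
  hence "coeff3 (hh :: 'k ps3) 0 3 0 = 0" by (erule_tac allE[of _ 0], erule_tac allE[of _ 3], erule_tac allE[of _ 0]) simp
  moreover have "coeff3 (hh :: 'k ps3) 0 3 0 = 1" unfolding hh_def coeff3_add coeff3_diff coeff3_mon by simp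
  ultimately show False by simp
qed

lemma W_hh: "var_W * hh = g1 * g1 - g2 * (g3 :: 'k::comm_ring_1 ps3)"
  unfolding hh_def g1_def g2_def g3_def mon_def by (simp add: algebra_simps eval_nat_numeral)



lemma ideal_pow_2: "ideal_pow I 2 = ideal_mult I (ideal_mult I UNIV)"
  by (simp add: numeral_2_eq_2)

lemma not_primary:
  fixes K :: "'k::field ps3 set"
  assumes K: "K = {f. phi f = 0}"
  shows "\<not> P_primary K (ideal_pow K 2)"
proof
  let ?Q = "ideal_pow K 2"
  assume pp: "P_primary K ?Q"
  have KI: "is_ideal K" using kernel_ideal K by simp
  have QK: "?Q \<subseteq> K" unfolding ideal_pow_2 using ideal_mult_sub[OF KI] by blast
  have K2: "K \<subseteq> Ord 2" using kernel_Ord2 K by blast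
  have "ideal_mult K UNIV \<subseteq> Ord (2 + 0)" by (rule ideal_mult_Ord[OF K2]) (simp add: Ord_0)
  hence "?Q \<subseteq> Ord (2 + (2 + 0))" unfolding ideal_pow_2 by (rule ideal_mult_Ord[OF K2])
  hence hQ: "hh \<notin> ?Q" using hh_not_Ord4 by auto
  have QI: "is_ideal ?Q" unfolding ideal_pow_2 ideal_mult_def by (rule ideal_gen_ideal)
  have g: "g1 \<in> K" "g2 \<in> K" "g3 \<in> K" using K phi_g1 phi_g2 phi_g3 by auto
  have g': "g1 \<in> ideal_mult K UNIV" "g3 \<in> ideal_mult K UNIV"
    using ideal_mult_in[OF g(1), of 1 UNIV] ideal_mult_in[OF g(3), of 1 UNIV] by auto
  have "g1 * g1 \<in> ?Q" "g2 * g3 \<in> ?Q" unfolding ideal_pow_2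
    using ideal_mult_in[OF g(1) g'(1)] ideal_mult_in[OF g(2) g'(2)] by auto
  hence "hh * var_W \<in> ?Q" using W_hh ideal_diff[OF QI] by (metis mult.commute)
  with pp hQ obtain n where "var_W ^ n \<in> ?Q" unfolding P_primary_def primary_ideal_def by blast
  hence "var_W ^ n \<in> K" using QK by blast
  hence "(fps_X ^ 3) ^ n = (0 :: 'k fps)" using K by (simp add: phi_W)
  thus False by simp
qed

section \<open>G-ideal\<close>

lemma sidx_wt: "m = sidx (wt m) \<longleftrightarrow> (\<exists>c. m = (0,0,c) \<or> m = (1,0,c) \<or> m = (0,1,c))"
proof -
  obtain a b c where m: "m = (a,b,c)" by (cases m) auto
  show ?thesis unfolding m sidx_def wt_def by auto
qed

lemma phi_surj:
  fixes s :: "'k::comm_ring_1 fps"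
  assumes "s $ 1 = 0" "s $ 2 = 0"
  shows "\<exists>r. phi r = s"
proof
  define r :: "'k ps3" where "r = mk3 (\<lambda>a b c. if (a,b,c) = sidx (wt (a,b,c)) then s $ wt (a,b,c) else 0)"
  show "phi r = s"
  proof (rule fps_ext)
    fix n
    have c: "c3 r m = (if m = sidx (wt m) then s $ wt m else 0)" for m
      unfolding r_def c3_def by (cases m) simp
    have "phi r $ n = (\<Sum>m\<in>Bw n. c3 r m)" unfolding phi_nth c3_def ..
    also have "\<dots> = (\<Sum>m\<in>Bw n. if m = sidx n then s $ n else 0)"
    proof (rule sum.cong[OF refl])
      fix m assume "m \<in> Bw n"
      hence "wt m = n" by (auto simp: Bw_def wt_def)
      thus "c3 r m = (if m = sidx n then s $ n else 0)" by (subst c) (simp only:)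
    qed
    also have "\<dots> = (if sidx n \<in> Bw n then s $ n else 0)"
      by (simp add: sum.delta')
    also have "\<dots> = s $ n"
    proof (cases "n = 1 \<or> n = 2")
      case True thus ?thesis using assms by auto
    next
      case False
      hence "sidx n \<in> Bw n" unfolding sidx_def Bw_def by auto presburger+
      thus ?thesis by simp
    qed
    finally show "phi r $ n = s $ n" .
  qed
qed

lemma frac_gen_pow: "(r, var_W ^ k) \<in> frac_alg_gen {(1, var_W)}"
proof (induction k arbitrary: r)
  case 0 thus ?case by (simp add: frac_alg_gen.base)
next
  case (Suc k)
  have "(r * 1, var_W ^ k * var_W) \<in> frac_alg_gen {(1, var_W)}"
    by (rule frac_alg_gen.mult[OF Suc.IH]) (rule frac_alg_gen.gen, simp)
  thus ?case by (simp only: power_Suc2 mult_1_right)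
qed

lemma key_div:
  fixes u w :: "'k::field fps"
  assumes "u \<noteq> 0"
  shows "\<exists>k s. s $ 1 = 0 \<and> s $ 2 = 0 \<and> w * fps_X ^ (3 * k) = s * u"
proof -
  define d where "d = subdegree u"
  define v where "v = fps_shift d u"
  have v0: "v $ 0 \<noteq> 0" using assms by (simp add: v_def d_def)
  have u: "u = v * fps_X ^ d" unfolding v_def d_def by (simp add: fps_shift_times_fps_X_power)
  define k where "k = d + 1"
  define s where "s = fps_X ^ (3 * k - d) * (w * inverse v)"
  have e: "3 * k = (3 * k - d) + d" unfolding k_def by simp
  have "s * u = fps_X ^ (3 * k - d) * fps_X ^ d * w * (inverse v * v)"
    unfolding s_def u by (simp add: algebra_simps)
  also have "\<dots> = w * fps_X ^ (3 * k)" using v0 e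
    by (simp add: inverse_mult_eq_1 inverse_mult_eq_1' power_add[symmetric] mult.commute)
  finally have "w * fps_X ^ (3 * k) = s * u" by simp
  moreover have "s $ 1 = 0" "s $ 2 = 0" unfolding s_def fps_X_power_mult_nth k_def by auto
  ultimately show ?thesis by blast
qed

lemma G_ideal_kernel:
  fixes K :: "'k::field ps3 set"
  assumes K: "K = {f. phi f = 0}"
  shows "G_ideal K"
  unfolding G_ideal_def
proof (intro conjI exI)
  show "prime_ideal K" using kernel_prime K by simp
  show "finite {(1::'k ps3, var_W)}" by simp
  show "{(1::'k ps3, var_W)} \<subseteq> frac_reps K" using K by (simp add: frac_reps_def phi_W)
  show "\<forall>x\<in>frac_reps K. \<exists>y\<in>frac_alg_gen {(1, var_W)}. frac_eq K x y"
  proof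
    fix x assume "x \<in> frac_reps K"
    then obtain a b where x: "x = (a,b)" and b: "phi b \<noteq> 0" using K by (auto simp: frac_reps_def)
    from key_div[OF b, of "phi a"] obtain k s where s: "s $ 1 = 0" "s $ 2 = 0"
      "phi a * fps_X ^ (3 * k) = s * phi b" by blast
    from phi_surj[OF s(1,2)] obtain r where r: "phi r = s" by blast
    have "frac_eq K x (r, var_W ^ k)"
      unfolding frac_eq_def x K using s(3) r by (simp add: phi_W power_mult)
    thus "\<exists>y\<in>frac_alg_gen {(1, var_W)}. frac_eq K x y" using frac_gen_pow by blast
  qed
qed




definition h0 :: "'k::field ps3 \<Rightarrow> 'k fls" where "h0 r = fps_to_fls (phi r)"

lemma h0_0[simp]: "h0 0 = 0" by (simp add: h0_def)
lemma h0_1[simp]: "h0 1 = 1" by (simp add: h0_def)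
lemma h0_add[simp]: "h0 (a + b) = h0 a + h0 b" by (simp add: h0_def)
lemma h0_diff[simp]: "h0 (a - b) = h0 a - h0 b" by (simp add: h0_def)
lemma h0_uminus[simp]: "h0 (- a) = - h0 a" by (simp add: h0_def)
lemma h0_mult[simp]: "h0 (a * b) = h0 a * h0 b" by (simp add: h0_def fls_times_fps_to_fls)
lemma h0_sum: "h0 (sum f A) = (\<Sum>x\<in>A. h0 (f x))"
  by (induction A rule: infinite_finite_induct) simp_all

lemma mp_add: "map_poly h0 (F + G) = map_poly h0 F + map_poly h0 G"
  by (rule poly_eqI) (simp add: coeff_map_poly)
lemma mp_mult: "map_poly h0 (F * G) = map_poly h0 F * map_poly h0 G"
  by (rule poly_eqI) (simp add: coeff_map_poly coeff_mult h0_sum)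
lemma mp_uminus: "map_poly h0 (- F) = - map_poly h0 F"
  by (rule poly_eqI) (simp add: coeff_map_poly)

definition zz :: "'k::field fls" where "zz = fls_X_intpow (-3)"

definition psi :: "'k::field ps3 poly \<Rightarrow> 'k fls" where "psi F = poly (map_poly h0 F) zz"

lemma psi_add[simp]: "psi (F + G) = psi F + psi G" by (simp add: psi_def mp_add)
lemma psi_mult[simp]: "psi (F * G) = psi F * psi G" by (simp add: psi_def mp_mult)
lemma psi_uminus[simp]: "psi (- F) = - psi F" by (simp add: psi_def mp_uminus)
lemma psi_diff[simp]: "psi (F - G) = psi F - psi G"
  using psi_add[of F "- G"] by simp
lemma psi_0[simp]: "psi 0 = 0" by (simp add: psi_def)
lemma psi_1[simp]: "psi 1 = 1" by (simp add: psi_def)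
lemma psi_const[simp]: "psi [:r:] = h0 r" by (simp add: psi_def map_poly_pCons)
lemma psi_X: "psi [:0, 1:] = zz" by (simp add: psi_def map_poly_pCons)
lemma psi_monom: "psi (monom r k) = h0 r * zz ^ k" by (simp add: psi_def map_poly_monom poly_monom)

lemma psi_surj: "\<exists>G. psi G = (L :: 'k::field fls)"
proof -
  define d where "d = fls_subdegree L"
  define B where "B = fls_base_factor_to_fps L"
  define k where "k = nat (- d) + 1"
  define e where "e = nat (3 * int k + d)"
  have k1: "int k \<ge> 1" "int k \<ge> 1 - d" unfolding k_def by linarith+
  have ei: "int e = 3 * int k + d" unfolding e_def using k1 by linarith
  have e3: "e \<ge> 3" using ei k1 by linarith
  define s where "s = fps_X ^ e * B"
  have "s $ 1 = 0" "s $ 2 = 0" unfolding s_def fps_X_power_mult_nth using e3 by auto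
  from phi_surj[OF this] obtain r where r: "phi r = s" by blast
  have "psi (monom r k) = fps_to_fls (fps_X ^ e) * fps_to_fls B * fls_X_intpow (-3) ^ k"
    unfolding psi_monom h0_def r s_def zz_def by (simp add: fls_times_fps_to_fls)
  also have "\<dots> = fls_X_intpow (int e) * fls_X_intpow (int k * -3) * fps_to_fls B"
    using fls_X_intpow_power[of "-3" k, where 'a='k]
    by (simp add: fps_to_fls_power fls_X_power_conv_shift_1 mult.commute mult.left_commute)
  also have "\<dots> = fls_X_intpow (int e + int k * -3) * fps_to_fls B"
    by (simp only: fls_X_intpow_times_fls_X_intpow)
  also have "int e + int k * -3 = d" using ei by simp
  also have "fls_X_intpow d * fps_to_fls B = L"
    unfolding fls_X_intpow_times_conv_shift d_def B_def
    by (rule fls_conv_base_factor_to_fps_shift_subdegree[symmetric])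
  finally show ?thesis by blast
qed




lemma hh_notin_sq:
  fixes K :: "'k::field ps3 set"
  assumes K: "K = {f. phi f = 0}"
  shows "hh \<notin> ideal_pow K 2"
proof -
  have K2: "K \<subseteq> Ord 2" using kernel_Ord2 K by blast
  have "ideal_mult K UNIV \<subseteq> Ord (2 + 0)" by (rule ideal_mult_Ord[OF K2]) (simp add: Ord_0)
  hence "ideal_pow K 2 \<subseteq> Ord (2 + (2 + 0))" unfolding ideal_pow_2 by (rule ideal_mult_Ord[OF K2])
  thus ?thesis using hh_not_Ord4 by auto
qed

definition Mx :: "'k::field ps3 poly set" where "Mx = {F. psi F = 0}"

lemma Mx_ideal: "is_ideal Mx"
  unfolding is_ideal_def Mx_def by auto

lemma Mx_maximal: "maximal_ideal Mx"
  unfolding maximal_ideal_def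
proof (intro conjI allI impI)
  show "is_ideal Mx" by (rule Mx_ideal)
  have "1 \<notin> Mx" by (simp add: Mx_def)
  thus "Mx \<noteq> UNIV" by blast
  fix J assume J: "is_ideal J \<and> Mx \<subseteq> J"
  show "J = Mx \<or> J = UNIV"
  proof (cases "J = Mx")
    case False
    with J obtain F where F: "F \<in> J" "F \<notin> Mx" by blast
    hence nz: "psi F \<noteq> 0" by (simp add: Mx_def)
    obtain G where G: "psi G = inverse (psi F)" using psi_surj by blast
    have "F * G - 1 \<in> Mx" using nz G by (simp add: Mx_def)
    hence "F * G - 1 \<in> J" using J by blast
    moreover have "F * G \<in> J" using J F ideal_mult_right by blast
    ultimately have "F * G - (F * G - 1) \<in> J" using J ideal_diff by blast
    hence "1 \<in> J" by simp
    thus ?thesis using J ideal_UNIV by blast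
  qed simp
qed

lemma contract_Mx: "contract Mx = {f :: 'k::field ps3. phi f = 0}"
  unfolding contract_def Mx_def by (simp add: h0_def)

lemma const_mult: "[:a:] * [:b:] = [:a * b:]" by (simp add: mult.commute)
lemma const_diff: "[:a:] - [:b:] = [:a - b:]" by simp

lemma Mx_not_stable: "\<not> power_stable (Mx :: 'k::field ps3 poly set)"
proof
  assume ps: "power_stable (Mx :: 'k ps3 poly set)"
  let ?K = "{f :: 'k ps3. phi f = 0}"
  let ?M2 = "ideal_pow (Mx :: 'k ps3 poly set) 2"
  have "contract ?M2 = ideal_pow ?K 2" using ps unfolding power_stable_def contract_Mx by auto
  moreover have "hh \<notin> ideal_pow ?K 2" by (rule hh_notin_sq) simp
  moreover have "hh \<in> contract ?M2"
  proof -
    have MI: "is_ideal ?M2" unfolding ideal_pow_2 ideal_mult_def by (rule ideal_gen_ideal)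
    define E :: "'k ps3 poly" where "E = 1 - [:var_W:] * [:0, 1:]"
    have hW: "h0 var_W = (fls_X_intpow 3 :: 'k fls)"
      by (simp add: h0_def phi_W fps_to_fls_power fls_X_power_conv_shift_1)
    have "h0 var_W * zz = (1::'k fls)"
      unfolding zz_def hW using fls_X_intpow_times_fls_X_intpow[of 3 "-3", where 'a='k] by simp
    hence EM: "E \<in> Mx" unfolding Mx_def E_def
      by (simp only: psi_diff psi_mult psi_const psi_X psi_1 mem_Collect_eq) simp
    have hM: "[:hh:] \<in> Mx" by (simp add: Mx_def h0_def phi_hh)
    have gM: "[:g1:] \<in> Mx" "[:g2:] \<in> Mx" "[:g3:] \<in> Mx"
      by (simp_all add: Mx_def h0_def phi_g1 phi_g2 phi_g3)
    have U: "E \<in> ideal_mult Mx UNIV" "[:g1:] \<in> ideal_mult Mx UNIV" "[:g3:] \<in> ideal_mult Mx UNIV"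
      using ideal_mult_in[OF EM, of 1 UNIV] ideal_mult_in[OF gM(1), of 1 UNIV]
        ideal_mult_in[OF gM(3), of 1 UNIV] by auto
    have a: "[:hh:] * E \<in> ?M2" unfolding ideal_pow_2 by (rule ideal_mult_in[OF hM U(1)])
    have "[:g1:] * [:g1:] \<in> ?M2" "[:g2:] * [:g3:] \<in> ?M2" unfolding ideal_pow_2
      using ideal_mult_in[OF gM(1) U(2)] ideal_mult_in[OF gM(2) U(3)] by auto
    hence "[:g1:] * [:g1:] - [:g2:] * [:g3:] \<in> ?M2" using ideal_diff[OF MI] by blast
    hence b: "[:var_W:] * [:hh:] \<in> ?M2" by (simp only: const_mult const_diff W_hh)
    have "[:hh:] * E + [:0, 1:] * ([:var_W:] * [:hh:]) \<in> ?M2"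
      using ideal_add[OF MI a ideal_mult[OF MI b]] .
    moreover have "[:hh:] * E + [:0, 1:] * ([:var_W:] * [:hh:]) = [:hh:]"
      unfolding E_def by (simp add: algebra_simps)
    ultimately show ?thesis unfolding contract_def by simp
  qed
  ultimately show False by simp
qed

theorem mainTheorem15:
  fixes P :: "'k::field ps3 set"
  assumes "P = {f. phi f = 0}"
  shows "P = ideal_gen {var_W ^ 3 - var_Y * var_Z, var_Y ^ 2 - var_W * var_Z,
                        var_Z ^ 2 - var_W ^ 2 * var_Y}
       \<and> G_ideal P
       \<and> \<not> P_primary P (ideal_pow P 2)
       \<and> (\<exists>M :: 'k ps3 poly set. maximal_ideal M \<and> contract M = P \<and> \<not> power_stable M)"
proof (intro conjI)
  show "P = ideal_gen {var_W ^ 3 - var_Y * var_Z, var_Y ^ 2 - var_W * var_Z, var_Z ^ 2 - var_W ^ 2 * var_Y}"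
    using kernel_eq_gen assms unfolding g1_def g2_def g3_def by simp
  show "G_ideal P" by (rule G_ideal_kernel[OF assms])
  show "\<not> P_primary P (ideal_pow P 2)" by (rule not_primary[OF assms])
  show "\<exists>M :: 'k ps3 poly set. maximal_ideal M \<and> contract M = P \<and> \<not> power_stable M"
    using Mx_maximal contract_Mx Mx_not_stable assms by blast
qed


end
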